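(* Let $t$ be odd and let $n_1,\dots,n_j$ be nonnegative integers. Then $\mathcal{L}^{(t)}_L\big(\prod_{i=1}^{j}L^{(t)}_{n_i}(x)\big)$ equals the number of inhomogeneous coverings of $K_{n_1,n_1}\sqcup\dots\sqcup K_{n_j,n_j}$ by $t$-paths, i.e. the number of sets of pairwise vertex-disjoint $t$-paths covering all vertices of the complete bipartite graph $K_{A,B}$, where $A$ (resp. $B$) is the disjoint union of the left (resp. right) parts of $K_{n_1,n_1},\dots,K_{n_j,n_j}$, such that no path has all its vertices in a single $K_{n_i,n_i}$.
   Context: Let $t\ge1$ be odd and $k=(t+1)/2$. In a complete bipartite graph, a $t$-path is a subgraph isomorphic to a path with $t$ edges (it has $k$ vertices on each side). $L^{(t)}_n$ is the polynomial with $L^{(t)}_n(x^2)=\sum_F(-1)^{|F|}x^{\,2n-(t+1)|F|}$, the sum over all families $F$ of pairwise vertex-disjoint $t$-paths in $K_{n,n}$. Let $\mu^{(t)}_n$ be the number of coverings of all vertices of $K_{n,n}$ by pairwise vertex-disjoint $t$-paths ($\mu^{(t)}_0=1$), and let $\mathcal{L}^{(t)}_L$ be the linear functional with $\mathcal{L}^{(t)}_L(x^n)=\mu^{(t)}_n$. *)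

theory Defs
  imports "HOL-Computational_Algebra.Polynomial"
begin

text \<open>Complete bipartite graph K_{A,B}: vertices Inl a (a in A, left part) and
Inr b (b in B, right part); edges are the pairs (a,b) in A x B.
A subgraph that is a path is represented by its edge set (its vertex set is
determined by the edges since t >= 1).\<close>

definition kb_adj :: "'a set \<Rightarrow> 'b set \<Rightarrow> ('a + 'b) \<Rightarrow> ('a + 'b) \<Rightarrow> bool" where
  "kb_adj A B u v \<longleftrightarrow> (\<exists>a\<in>A. \<exists>b\<in>B. (u = Inl a \<and> v = Inr b) \<or> (u = Inr b \<and> v = Inl a))"

definition path_edges :: "('a + 'b) list \<Rightarrow> ('a \<times> 'b) set" where
  "path_edges vs = {(a, b). \<exists>i. i + 1 < length vs \<and> {vs ! i, vs ! (i + 1)} = {Inl a, Inr b}}"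

definition pverts :: "('a \<times> 'b) set \<Rightarrow> ('a + 'b) set" where
  "pverts P = Inl ` fst ` P \<union> Inr ` snd ` P"

definition tpaths :: "nat \<Rightarrow> 'a set \<Rightarrow> 'b set \<Rightarrow> ('a \<times> 'b) set set" where
  "tpaths t A B = {path_edges vs | vs. length vs = t + 1 \<and> distinct vs \<and>
      (\<forall>i<t. kb_adj A B (vs ! i) (vs ! (i + 1)))}"

definition path_families :: "nat \<Rightarrow> 'a set \<Rightarrow> 'b set \<Rightarrow> ('a \<times> 'b) set set set" where
  "path_families t A B = {F. F \<subseteq> tpaths t A B \<and>
      (\<forall>P\<in>F. \<forall>Q\<in>F. P \<noteq> Q \<longrightarrow> pverts P \<inter> pverts Q = {})}"

definition path_coverings :: "nat \<Rightarrow> 'a set \<Rightarrow> 'b set \<Rightarrow> ('a \<times> 'b) set set set" where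
  "path_coverings t A B = {F \<in> path_families t A B. (\<Union>P\<in>F. pverts P) = Inl ` A \<union> Inr ` B}"

definition mu :: "nat \<Rightarrow> nat \<Rightarrow> nat" where
  "mu t n = card (path_coverings t {..<n} {..<n})"

text \<open>L^(t)_n, with L_n(x^2) = sum_F (-1)^|F| x^(2n-(t+1)|F|), i.e.
L_n(y) = sum_F (-1)^|F| y^(n - ((t+1) div 2) |F|).\<close>
definition Lpoly :: "nat \<Rightarrow> nat \<Rightarrow> int poly" where
  "Lpoly t n = (\<Sum>F\<in>path_families t {..<n} {..<n}.
      monom ((-1) ^ card F) (n - ((t + 1) div 2) * card F))"

definition Lfun :: "nat \<Rightarrow> int poly \<Rightarrow> int" where
  "Lfun t p = (\<Sum>i\<le>degree p. coeff p i * int (mu t i))"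

text \<open>Disjoint union of K_{n_1,n_1},...,K_{n_j,n_j}: both sides are
{(i,a). i < j, a < n_i}; the block of a vertex is its first component.\<close>
definition blocks :: "nat list \<Rightarrow> (nat \<times> nat) set" where
  "blocks ns = {(i, a). i < length ns \<and> a < ns ! i}"

definition blk :: "(nat \<times> nat) + (nat \<times> nat) \<Rightarrow> nat" where
  "blk v = (case v of Inl x \<Rightarrow> fst x | Inr y \<Rightarrow> fst y)"

definition inhom_coverings :: "nat \<Rightarrow> nat list \<Rightarrow> ((nat \<times> nat) \<times> (nat \<times> nat)) set set set" where
  "inhom_coverings t ns = {F \<in> path_coverings t (blocks ns) (blocks ns).
      \<forall>P\<in>F. \<not> (\<exists>i. \<forall>v\<in>pverts P. blk v = i)}"

end

theory Submission
  imports Defs "HOL-Library.FuncSet"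
begin


definition alt :: "('a + 'b) list \<Rightarrow> bool" where
  "alt vs \<longleftrightarrow> (\<forall>i. i + 1 < length vs \<longrightarrow> isl (vs ! i) \<noteq> isl (vs ! (i + 1)))"

lemma kb_adj_iff:
  "kb_adj A B u v \<longleftrightarrow> isl u \<noteq> isl v \<and> u \<in> Inl ` A \<union> Inr ` B \<and> v \<in> Inl ` A \<union> Inr ` B"
  by (cases u; cases v) (auto simp: kb_adj_def)

lemma isl_pair: "isl x \<noteq> isl y \<Longrightarrow> \<exists>a b. {x, y} = {Inl a, Inr b}"
  by (cases x; cases y) auto

lemma pair_eq: "({Inl a, Inr b} = ({Inl a', Inr b'} :: ('a + 'b) set)) \<longleftrightarrow> a = a' \<and> b = b'"
  by (auto simp: doubleton_eq_iff)

lemma pverts_mem_Inl: "Inl a \<in> pverts P \<longleftrightarrow> a \<in> fst ` P"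
  by (auto simp: pverts_def)

lemma pverts_mem_Inr: "Inr b \<in> pverts P \<longleftrightarrow> b \<in> snd ` P"
  by (auto simp: pverts_def)

lemma pverts_sub_imp: "pverts P \<subseteq> Inl ` A \<union> Inr ` B \<Longrightarrow> P \<subseteq> A \<times> B"
  by (force simp: pverts_def)

lemma sub_imp_pverts: "P \<subseteq> A \<times> B \<Longrightarrow> pverts P \<subseteq> Inl ` A \<union> Inr ` B"
  by (force simp: pverts_def)

lemma finite_pverts_imp: "finite (pverts P) \<Longrightarrow> finite P"
proof -
  assume f: "finite (pverts P)"
  have "finite (Inl ` fst ` P :: ('a + 'b) set)" using f by (auto simp: pverts_def intro: finite_subset)
  hence a: "finite (fst ` P)" by (rule finite_imageD) auto
  have "finite (Inr ` snd ` P :: ('a + 'b) set)" using f by (auto simp: pverts_def intro: finite_subset)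
  hence b: "finite (snd ` P)" by (rule finite_imageD) auto
  have "P \<subseteq> fst ` P \<times> snd ` P" by force
  thus ?thesis using a b finite_subset by blast
qed

lemma pe_pair_mem:
  assumes "alt vs" "i + 1 < length vs"
  shows "vs ! i \<in> pverts (path_edges vs) \<and> vs ! (i + 1) \<in> pverts (path_edges vs)"
proof -
  from assms obtain a b where ab: "{vs ! i, vs ! (i + 1)} = {Inl a, Inr b}"
    using isl_pair unfolding alt_def by blast
  hence "(a, b) \<in> path_edges vs" using assms(2) unfolding path_edges_def by blast
  hence "Inl a \<in> pverts (path_edges vs)" "Inr b \<in> pverts (path_edges vs)"
    by (force simp: pverts_def)+
  thus ?thesis using ab by (auto simp: doubleton_eq_iff)
qed

lemma pverts_path_edges:
  assumes "alt vs" "2 \<le> length vs"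
  shows "pverts (path_edges vs) = set vs"
proof
  show "pverts (path_edges vs) \<subseteq> set vs"
  proof
    fix x assume "x \<in> pverts (path_edges vs)"
    then obtain a b i where "i + 1 < length vs" "{vs ! i, vs ! (i + 1)} = {Inl a, Inr b}"
      "x = Inl a \<or> x = Inr b"
      unfolding pverts_def path_edges_def by auto
    thus "x \<in> set vs" by (metis insert_iff nth_mem add_lessD1 singletonD)
  qed
  show "set vs \<subseteq> pverts (path_edges vs)"
  proof
    fix x assume "x \<in> set vs"
    then obtain j where j: "j < length vs" "x = vs ! j" by (auto simp: in_set_conv_nth)
    show "x \<in> pverts (path_edges vs)"
    proof (cases "j + 1 < length vs")
      case True thus ?thesis using pe_pair_mem[OF assms(1) True] j by simp
    next
      case False
      hence "(j - 1) + 1 < length vs" "j - 1 + 1 = j" using j assms(2) by auto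
      thus ?thesis using pe_pair_mem[OF assms(1), of "j - 1"] j by simp
    qed
  qed
qed

lemma tp_char:
  assumes "t > 0"
  shows "P \<in> tpaths t A B \<longleftrightarrow> (\<exists>vs. P = path_edges vs \<and> length vs = t + 1 \<and> distinct vs \<and> alt vs
          \<and> set vs \<subseteq> Inl ` A \<union> Inr ` B)"
proof
  assume "P \<in> tpaths t A B"
  then obtain vs where vs: "P = path_edges vs" "length vs = t + 1" "distinct vs"
    "\<forall>i<t. kb_adj A B (vs ! i) (vs ! (i + 1))" unfolding tpaths_def by blast
  have "alt vs" using vs(2,4) unfolding alt_def kb_adj_iff by auto
  moreover have "set vs \<subseteq> Inl ` A \<union> Inr ` B"
  proof
    fix x assume "x \<in> set vs"
    then obtain j where j: "j < length vs" "x = vs ! j" by (auto simp: in_set_conv_nth)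
    show "x \<in> Inl ` A \<union> Inr ` B"
    proof (cases "j < t")
      case True thus ?thesis using vs(4) j unfolding kb_adj_iff by blast
    next
      case False
      hence "j - 1 < t" "j - 1 + 1 = j" using j vs(2) assms by auto
      thus ?thesis using vs(4) j unfolding kb_adj_iff by metis
    qed
  qed
  ultimately show "\<exists>vs. P = path_edges vs \<and> length vs = t + 1 \<and> distinct vs \<and> alt vs
          \<and> set vs \<subseteq> Inl ` A \<union> Inr ` B" using vs by blast
next
  assume "\<exists>vs. P = path_edges vs \<and> length vs = t + 1 \<and> distinct vs \<and> alt vs
          \<and> set vs \<subseteq> Inl ` A \<union> Inr ` B"
  then obtain vs where vs: "P = path_edges vs" "length vs = t + 1" "distinct vs" "alt vs"
    "set vs \<subseteq> Inl ` A \<union> Inr ` B" by blast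
  have "\<forall>i<t. kb_adj A B (vs ! i) (vs ! (i + 1))"
  proof (intro allI impI)
    fix i assume i: "i < t"
    hence "vs ! i \<in> set vs" "vs ! (i + 1) \<in> set vs" using vs(2) by simp_all
    hence m: "vs ! i \<in> Inl ` A \<union> Inr ` B" "vs ! (i + 1) \<in> Inl ` A \<union> Inr ` B" using vs(5) by blast+
    have "isl (vs ! i) \<noteq> isl (vs ! (i + 1))" using vs(2,4) i unfolding alt_def by auto
    thus "kb_adj A B (vs ! i) (vs ! (i + 1))" using m unfolding kb_adj_iff by blast
  qed
  thus "P \<in> tpaths t A B" using vs unfolding tpaths_def by blast
qed

lemma tp_pverts:
  assumes "t > 0" "P \<in> tpaths t A B"
  shows "pverts P \<subseteq> Inl ` A \<union> Inr ` B" "pverts P \<noteq> {}" "finite P" "P \<subseteq> A \<times> B"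
proof -
  obtain vs where vs: "P = path_edges vs" "length vs = t + 1" "distinct vs" "alt vs"
    "set vs \<subseteq> Inl ` A \<union> Inr ` B" using assms(2)[unfolded tp_char[OF assms(1)]] by blast
  have pv: "pverts P = set vs" using pverts_path_edges[OF vs(4)] vs(1,2) assms(1) by simp
  show 1: "pverts P \<subseteq> Inl ` A \<union> Inr ` B" using pv vs by simp
  show "pverts P \<noteq> {}" using pv vs(2) by auto
  show "finite P" using finite_pverts_imp[of P] pv by simp
  show "P \<subseteq> A \<times> B" using 1 pverts_sub_imp by blast
qed

lemma tpaths_mono: "A \<subseteq> A' \<Longrightarrow> B \<subseteq> B' \<Longrightarrow> tpaths t A B \<subseteq> tpaths t A' B'"
  unfolding tpaths_def kb_adj_def by blast

lemma tpaths_restrict: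
  assumes "t > 0"
  shows "P \<in> tpaths t A B \<longleftrightarrow> P \<in> tpaths t UNIV UNIV \<and> pverts P \<subseteq> Inl ` A \<union> Inr ` B"
proof
  assume "P \<in> tpaths t A B"
  thus "P \<in> tpaths t UNIV UNIV \<and> pverts P \<subseteq> Inl ` A \<union> Inr ` B"
    using tp_pverts[OF assms] tpaths_mono[of A UNIV B UNIV t] by blast
next
  assume h: "P \<in> tpaths t UNIV UNIV \<and> pverts P \<subseteq> Inl ` A \<union> Inr ` B"
  then obtain vs where vs: "P = path_edges vs" "length vs = t + 1" "distinct vs" "alt vs"
    using h[unfolded tp_char[OF assms]] by blast
  have "pverts P = set vs" using pverts_path_edges[OF vs(4)] vs(1,2) assms(1) by simp
  hence "set vs \<subseteq> Inl ` A \<union> Inr ` B" using h by simp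
  thus "P \<in> tpaths t A B" unfolding tp_char[OF assms] using vs by blast
qed

lemma alt_Cons2: "alt (x # y # r) \<Longrightarrow> alt r \<and> isl x \<noteq> isl y"
proof -
  assume a: "alt (x # y # r)"
  have "0 + 1 < length (x # y # r)" by simp
  from a[unfolded alt_def, rule_format, OF this] have "isl x \<noteq> isl y" by simp
  moreover have "alt r" unfolding alt_def
  proof (intro allI impI)
    fix i assume "i + 1 < length r"
    hence "(i + 2) + 1 < length (x # y # r)" by simp
    hence "isl ((x#y#r) ! (i + 2)) \<noteq> isl ((x#y#r) ! (i + 2 + 1))" using a unfolding alt_def by blast
    thus "isl (r ! i) \<noteq> isl (r ! (i + 1))" by (simp add: numeral_2_eq_2)
  qed
  ultimately show ?thesis by simp
qed

lemma alt_count: "alt vs \<Longrightarrow> length vs = 2 * m \<Longrightarrow> length (filter isl vs) = m"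
proof (induction m arbitrary: vs)
  case 0 thus ?case by simp
next
  case (Suc m)
  then obtain x y r where v: "vs = x # y # r" "length r = 2 * m"
    by (cases vs; cases "tl vs") auto
  have "alt r" "isl x \<noteq> isl y" using alt_Cons2 Suc.prems v by blast+
  thus ?case using Suc.IH[of r] v by auto
qed

lemma tp_card:
  assumes "odd t" "P \<in> tpaths t A B"
  shows "card (fst ` P) = (t + 1) div 2" "card (snd ` P) = (t + 1) div 2"
proof -
  have t: "t > 0" using assms by (cases t) auto
  obtain vs where vs: "P = path_edges vs" "length vs = t + 1" "distinct vs" "alt vs"
    using assms(2)[unfolded tp_char[OF t]] by blast
  have pv: "pverts P = set vs" using pverts_path_edges[OF vs(4)] vs(1,2) t by simp
  define m where "m = (t + 1) div 2"
  have m: "t + 1 = 2 * m" using assms unfolding m_def by simp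
  have c1: "length (filter isl vs) = m" using alt_count[OF vs(4)] vs(2) m by simp
  have c2: "length (filter (\<lambda>x. \<not> isl x) vs) = m"
    using sum_length_filter_compl[of isl vs] c1 vs(2) m by simp
  have e1: "fst ` P = {a. Inl a \<in> set vs}" unfolding pv[symmetric] pverts_mem_Inl by simp
  have "Inl ` {a. Inl a \<in> set vs} = set (filter isl vs)"
  proof
    show "Inl ` {a. Inl a \<in> set vs} \<subseteq> set (filter isl vs)" by auto
    show "set (filter isl vs) \<subseteq> Inl ` {a. Inl a \<in> set vs}"
    proof
      fix x assume "x \<in> set (filter isl vs)"
      hence x: "x \<in> set vs" "isl x" by auto
      hence "x = Inl (projl x)" by simp
      thus "x \<in> Inl ` {a. Inl a \<in> set vs}" using x by (intro image_eqI[of _ _ "projl x"]) auto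
    qed
  qed
  hence eq: "Inl ` fst ` P = set (filter isl vs)" using e1 by simp
  have "card (fst ` P) = card (set (filter isl vs))" by (subst eq[symmetric]) (simp add: card_image)
  also have "\<dots> = m" using c1 distinct_card[of "filter isl vs"] vs(3) by simp
  finally show "card (fst ` P) = (t + 1) div 2" using m_def by simp
  have e2: "snd ` P = {a. Inr a \<in> set vs}" unfolding pv[symmetric] pverts_mem_Inr by simp
  have "Inr ` {a. Inr a \<in> set vs} = set (filter (\<lambda>x. \<not> isl x) vs)"
  proof
    show "Inr ` {a. Inr a \<in> set vs} \<subseteq> set (filter (\<lambda>x. \<not> isl x) vs)" by auto
    show "set (filter (\<lambda>x. \<not> isl x) vs) \<subseteq> Inr ` {a. Inr a \<in> set vs}"
    proof
      fix x assume "x \<in> set (filter (\<lambda>x. \<not> isl x) vs)"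
      hence x: "x \<in> set vs" "\<not> isl x" by auto
      hence "x = Inr (projr x)" by simp
      thus "x \<in> Inr ` {a. Inr a \<in> set vs}" using x by (intro image_eqI[of _ _ "projr x"]) auto
    qed
  qed
  hence eq2: "Inr ` snd ` P = set (filter (\<lambda>x. \<not> isl x) vs)" using e2 by simp
  have "card (snd ` P) = card (set (filter (\<lambda>x. \<not> isl x) vs))" by (subst eq2[symmetric]) (simp add: card_image)
  also have "\<dots> = m" using c2 distinct_card[of "filter (\<lambda>x. \<not> isl x) vs"] vs(3) by simp
  finally show "card (snd ` P) = (t + 1) div 2" using m_def by simp
qed



lemma pe_map:
  assumes "alt vs"
  shows "path_edges (map (map_sum f g) vs) = map_prod f g ` path_edges vs"
proof
  show "path_edges (map (map_sum f g) vs) \<subseteq> map_prod f g ` path_edges vs"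
  proof
    fix x assume "x \<in> path_edges (map (map_sum f g) vs)"
    then obtain a' b' i where x: "x = (a', b')" "i + 1 < length vs"
      "{map_sum f g (vs ! i), map_sum f g (vs ! (i + 1))} = {Inl a', Inr b'}"
      unfolding path_edges_def by auto
    obtain a b where ab: "{vs ! i, vs ! (i + 1)} = {Inl a, Inr b}"
      using isl_pair assms x(2) unfolding alt_def by blast
    have "map_sum f g ` {vs ! i, vs ! (i + 1)} = {Inl (f a), Inr (g b)}" using ab by simp
    hence "{Inl (f a), Inr (g b)} = {Inl a', Inr b'}" using x(3) by simp
    hence "a' = f a" "b' = g b" using pair_eq by metis+
    moreover have "(a, b) \<in> path_edges vs" using ab x(2) unfolding path_edges_def by blast
    ultimately show "x \<in> map_prod f g ` path_edges vs" using x(1) by force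
  qed
  show "map_prod f g ` path_edges vs \<subseteq> path_edges (map (map_sum f g) vs)"
  proof
    fix x assume "x \<in> map_prod f g ` path_edges vs"
    then obtain a b i where x: "x = (f a, g b)" "i + 1 < length vs"
      "{vs ! i, vs ! (i + 1)} = {Inl a, Inr b}"
      unfolding path_edges_def by auto
    have "map_sum f g ` {vs ! i, vs ! (i + 1)} = {Inl (f a), Inr (g b)}" using x(3) by simp
    hence "{map (map_sum f g) vs ! i, map (map_sum f g) vs ! (i + 1)} = {Inl (f a), Inr (g b)}"
      using x(2) by simp
    thus "x \<in> path_edges (map (map_sum f g) vs)" using x(1,2) unfolding path_edges_def by force
  qed
qed

lemma inj_map_sum_on:
  "inj_on f A \<Longrightarrow> inj_on g B \<Longrightarrow> inj_on (map_sum f g) (Inl ` A \<union> Inr ` B)"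
proof (rule inj_onI)
  fix x y assume inj: "inj_on f A" "inj_on g B" and x: "x \<in> Inl ` A \<union> Inr ` B" and y: "y \<in> Inl ` A \<union> Inr ` B"
    and e: "map_sum f g x = map_sum f g y"
  from x y show "x = y"
  proof (elim UnE imageE)
    fix a a' assume "x = Inl a" "a \<in> A" "y = Inl a'" "a' \<in> A"
    thus ?thesis using e inj_onD[OF inj(1)] by simp
  next
    fix a b assume "x = Inl a" "y = Inr b" thus ?thesis using e by simp
  next
    fix a b assume "x = Inr b" "y = Inl a" thus ?thesis using e by simp
  next
    fix b b' assume "x = Inr b" "b \<in> B" "y = Inr b'" "b' \<in> B"
    thus ?thesis using e inj_onD[OF inj(2)] by simp
  qed
qed

lemma pverts_image: "pverts (map_prod f g ` P) = map_sum f g ` pverts P"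
  unfolding pverts_def by (simp add: image_Un image_image)

lemma tpaths_map:
  assumes t: "t > 0" and P: "P \<in> tpaths t A B" and f: "inj_on f A" and g: "inj_on g B"
  shows "map_prod f g ` P \<in> tpaths t (f ` A) (g ` B)"
proof -
  obtain vs where vs: "P = path_edges vs" "length vs = t + 1" "distinct vs" "alt vs"
    "set vs \<subseteq> Inl ` A \<union> Inr ` B" using P[unfolded tp_char[OF t]] by blast
  let ?ws = "map (map_sum f g) vs"
  have "path_edges ?ws = map_prod f g ` P" using pe_map[OF vs(4)] vs(1) by simp
  moreover have "length ?ws = t + 1" using vs by simp
  moreover have "distinct ?ws" using vs(3) inj_on_subset[OF inj_map_sum_on[OF f g] vs(5)]
    by (simp add: distinct_map)
  moreover have "alt ?ws" using vs(4) unfolding alt_def by (simp add: isl_map_sum)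
  moreover have "set ?ws \<subseteq> Inl ` f ` A \<union> Inr ` g ` B" using vs(5) by auto
  ultimately show ?thesis unfolding tp_char[OF t] by metis
qed

lemma fam_tp: "F \<in> path_families t A B \<Longrightarrow> P \<in> F \<Longrightarrow> P \<in> tpaths t A B"
  unfolding path_families_def by blast

lemma fam_disj: "F \<in> path_families t A B \<Longrightarrow> P \<in> F \<Longrightarrow> Q \<in> F \<Longrightarrow> P \<noteq> Q \<Longrightarrow> pverts P \<inter> pverts Q = {}"
  unfolding path_families_def by blast

lemma fam_sub: "F \<in> path_families t A B \<Longrightarrow> G \<subseteq> F \<Longrightarrow> G \<in> path_families t A B"
  unfolding path_families_def by blast

lemma families_map:
  assumes t: "t > 0" and F: "F \<in> path_families t A B" and f: "inj_on f A" and g: "inj_on g B"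
  shows "image (map_prod f g) ` F \<in> path_families t (f ` A) (g ` B)"
  unfolding path_families_def
proof (intro CollectI conjI ballI impI subsetI)
  fix P' assume "P' \<in> image (map_prod f g) ` F"
  then obtain P where "P \<in> F" "P' = map_prod f g ` P" by blast
  thus "P' \<in> tpaths t (f ` A) (g ` B)" using tpaths_map[OF t fam_tp[OF F] f g] by simp
next
  fix P' Q' assume h: "P' \<in> image (map_prod f g) ` F" "Q' \<in> image (map_prod f g) ` F" "P' \<noteq> Q'"
  then obtain P Q where PQ: "P \<in> F" "P' = map_prod f g ` P" "Q \<in> F" "Q' = map_prod f g ` Q" by blast
  hence "P \<noteq> Q" using h(3) by blast
  hence d: "pverts P \<inter> pverts Q = {}" using fam_disj[OF F PQ(1,3)] by simp
  have s: "pverts P \<subseteq> Inl ` A \<union> Inr ` B" "pverts Q \<subseteq> Inl ` A \<union> Inr ` B"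
    using tp_pverts(1)[OF t fam_tp[OF F]] PQ by auto
  have "map_sum f g ` pverts P \<inter> map_sum f g ` pverts Q = map_sum f g ` (pverts P \<inter> pverts Q)"
    using inj_on_image_Int[OF inj_map_sum_on[OF f g] s] by simp
  thus "pverts P' \<inter> pverts Q' = {}" using d PQ by (simp add: pverts_image)
qed

lemma coverings_map:
  assumes t: "t > 0" and F: "F \<in> path_coverings t A B" and f: "inj_on f A" and g: "inj_on g B"
  shows "image (map_prod f g) ` F \<in> path_coverings t (f ` A) (g ` B)"
proof -
  have F1: "F \<in> path_families t A B" and F2: "(\<Union>P\<in>F. pverts P) = Inl ` A \<union> Inr ` B"
    using F unfolding path_coverings_def by auto
  have "(\<Union>P\<in>image (map_prod f g) ` F. pverts P) = map_sum f g ` (\<Union>P\<in>F. pverts P)"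
    by (auto simp: pverts_image)
  also have "\<dots> = Inl ` f ` A \<union> Inr ` g ` B" using F2 by (simp add: image_Un image_image)
  finally show ?thesis using families_map[OF t F1 f g] unfolding path_coverings_def by blast
qed

lemma tpaths_sub_Pow: "t > 0 \<Longrightarrow> tpaths t A B \<subseteq> Pow (A \<times> B)"
  using tp_pverts(4) by blast

lemma families_sub: assumes t: "t > 0" shows "path_families t A B \<subseteq> Pow (Pow (A \<times> B))"
proof
  fix F assume F: "F \<in> path_families t A B"
  have "\<forall>P\<in>F. P \<in> Pow (A \<times> B)" using fam_tp[OF F] tpaths_sub_Pow[OF t, of A B] by blast
  thus "F \<in> Pow (Pow (A \<times> B))" by blast
qed

lemma finite_families: "t > 0 \<Longrightarrow> finite A \<Longrightarrow> finite B \<Longrightarrow> finite (path_families t A B)"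
  by (rule finite_subset[OF families_sub]) simp_all

lemma finite_coverings: "t > 0 \<Longrightarrow> finite A \<Longrightarrow> finite B \<Longrightarrow> finite (path_coverings t A B)"
  unfolding path_coverings_def by (rule finite_subset[OF _ finite_families]) auto

lemma coverings_card_le:
  assumes t: "t > 0" and fin: "finite A" "finite B" and f: "inj_on f A" and g: "inj_on g B"
  shows "card (path_coverings t A B) \<le> card (path_coverings t (f ` A) (g ` B))"
proof -
  let ?h = "image (image (map_prod f g))"
  have "inj_on (map_prod f g) (A \<times> B)" using f g by (rule map_prod_inj_on)
  hence "inj_on (image (map_prod f g)) (Pow (A \<times> B))" by (rule inj_on_image_Pow)
  hence "inj_on ?h (Pow (Pow (A \<times> B)))" by (rule inj_on_image_Pow)
  moreover have "path_coverings t A B \<subseteq> Pow (Pow (A \<times> B))"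
    using families_sub[OF t, of A B] unfolding path_coverings_def by blast
  ultimately have inj: "inj_on ?h (path_coverings t A B)" by (rule inj_on_subset)
  have "?h ` path_coverings t A B \<subseteq> path_coverings t (f ` A) (g ` B)"
    by (rule image_subsetI, rule coverings_map[OF t _ f g])
  moreover have "finite (path_coverings t (f ` A) (g ` B))" by (rule finite_coverings[OF t]) (simp_all add: fin)
  ultimately show ?thesis using card_inj_on_le[OF inj] by blast
qed

lemma coverings_card_bij:
  assumes t: "t > 0" and fin: "finite A" "finite B"
    and f: "bij_betw f A A2" and g: "bij_betw g B B2"
  shows "card (path_coverings t A B) = card (path_coverings t A2 B2)"
proof (rule antisym)
  show "card (path_coverings t A B) \<le> card (path_coverings t A2 B2)"
    using coverings_card_le[OF t fin, of f g] f g unfolding bij_betw_def by simp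
  have f2: "bij_betw (inv_into A f) A2 A" and g2: "bij_betw (inv_into B g) B2 B"
    using f g by (simp_all add: bij_betw_inv_into)
  have fin2: "finite A2" "finite B2" using f g fin bij_betw_finite by blast+
  show "card (path_coverings t A2 B2) \<le> card (path_coverings t A B)"
    using coverings_card_le[OF t fin2, of "inv_into A f" "inv_into B g"] f2 g2
    unfolding bij_betw_def by simp
qed

lemma coverings_card_mu:
  assumes t: "t > 0" and fin: "finite A" "finite B" and c: "card A = m" "card B = m"
  shows "card (path_coverings t A B) = mu t m"
proof -
  obtain f where f: "bij_betw f A {..<m}" using finite_same_card_bij[OF fin(1), of "{..<m}"] c by auto
  obtain g where g: "bij_betw g B {..<m}" using finite_same_card_bij[OF fin(2), of "{..<m}"] c by auto
  show ?thesis unfolding mu_def using coverings_card_bij[OF t fin f g] .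
qed

definition lefts :: "('a \<times> 'b) set set \<Rightarrow> 'a set" where
  "lefts F = (\<Union>P\<in>F. fst ` P)"
definition rights :: "('a \<times> 'b) set set \<Rightarrow> 'b set" where
  "rights F = (\<Union>P\<in>F. snd ` P)"

lemma lefts_card:
  assumes t: "odd t" and F: "F \<in> path_families t A B" and fin: "finite A" "finite B"
  shows "card (lefts F) = (t + 1) div 2 * card F" "lefts F \<subseteq> A"
    "card (rights F) = (t + 1) div 2 * card F" "rights F \<subseteq> B"
proof -
  have t0: "t > 0" using t by (cases t) auto
  have "F \<subseteq> Pow (A \<times> B)" using families_sub[OF t0] F by blast
  moreover have "finite (Pow (A \<times> B))" using fin by simp
  ultimately have finF: "finite F" by (rule finite_subset)
  have sub: "\<And>P. P \<in> F \<Longrightarrow> P \<subseteq> A \<times> B" using tp_pverts(4)[OF t0 fam_tp[OF F]] by blast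
  have finP: "\<And>P. P \<in> F \<Longrightarrow> finite P" using tp_pverts(3)[OF t0 fam_tp[OF F]] by blast
  have dl: "fst ` P \<inter> fst ` Q = {}" if h: "P \<in> F" "Q \<in> F" "P \<noteq> Q" for P Q
  proof -
    have "pverts P \<inter> pverts Q = {}" by (rule fam_disj[OF F h])
    thus ?thesis using pverts_mem_Inl[of _ P] pverts_mem_Inl[of _ Q] by blast
  qed
  have dr: "snd ` P \<inter> snd ` Q = {}" if h: "P \<in> F" "Q \<in> F" "P \<noteq> Q" for P Q
  proof -
    have "pverts P \<inter> pverts Q = {}" by (rule fam_disj[OF F h])
    thus ?thesis using pverts_mem_Inr[of _ P] pverts_mem_Inr[of _ Q] by blast
  qed
  have "card (lefts F) = (\<Sum>P\<in>F. card (fst ` P))"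
    unfolding lefts_def by (rule card_UN_disjoint[OF finF]) (use finP dl in auto)
  also have "\<dots> = (\<Sum>P\<in>F. (t + 1) div 2)" using tp_card(1)[OF t fam_tp[OF F]] by simp
  finally show "card (lefts F) = (t + 1) div 2 * card F" by simp
  have "card (rights F) = (\<Sum>P\<in>F. card (snd ` P))"
    unfolding rights_def by (rule card_UN_disjoint[OF finF]) (use finP dr in auto)
  also have "\<dots> = (\<Sum>P\<in>F. (t + 1) div 2)" using tp_card(2)[OF t fam_tp[OF F]] by simp
  finally show "card (rights F) = (t + 1) div 2 * card F" by simp
  show "lefts F \<subseteq> A" "rights F \<subseteq> B" unfolding lefts_def rights_def using sub by force+
qed



lemma Lfun_bound:
  assumes "degree p \<le> D"
  shows "Lfun t p = (\<Sum>i\<le>D. coeff p i * int (mu t i))"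
  unfolding Lfun_def
  by (rule sum.mono_neutral_left) (use assms in \<open>auto simp: coeff_eq_0\<close>)

lemma Lfun_add: "Lfun t (p + q) = Lfun t p + Lfun t q"
proof -
  let ?D = "max (degree p) (degree q)"
  have "Lfun t (p + q) = (\<Sum>i\<le>?D. coeff (p + q) i * int (mu t i))"
    by (rule Lfun_bound) (metis degree_add_le max.cobounded1 max.cobounded2)
  also have "\<dots> = (\<Sum>i\<le>?D. coeff p i * int (mu t i)) + (\<Sum>i\<le>?D. coeff q i * int (mu t i))"
    by (simp add: sum.distrib algebra_simps)
  also have "\<dots> = Lfun t p + Lfun t q"
    by (simp add: Lfun_bound[symmetric])
  finally show ?thesis .
qed

lemma Lfun_zero: "Lfun t 0 = 0"
  unfolding Lfun_def by simp

lemma Lfun_sum: "finite S \<Longrightarrow> Lfun t (\<Sum>x\<in>S. p x) = (\<Sum>x\<in>S. Lfun t (p x))"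
  by (induction S rule: finite_induct) (simp_all add: Lfun_zero Lfun_add)

lemma Lfun_monom: "Lfun t (monom c d) = c * int (mu t d)"
proof -
  have "Lfun t (monom c d) = (\<Sum>i\<le>d. coeff (monom c d) i * int (mu t i))"
    by (rule Lfun_bound) (simp add: degree_monom_le)
  also have "\<dots> = (\<Sum>i\<le>d. (if i = d then c * int (mu t d) else 0))"
    by (rule sum.cong) (auto simp: coeff_monom)
  also have "\<dots> = c * int (mu t d)" by simp
  finally show ?thesis .
qed

lemma alt_pow_sum:
  assumes "finite X"
  shows "(\<Sum>Y\<in>Pow X. (-1::int) ^ card Y) = (if X = {} then 1 else 0)"
proof -
  have "(\<Prod>x\<in>X. (1::int) - 1) = (\<Sum>Y\<in>Pow X. (-1) ^ card Y * (\<Prod>x\<in>Y. 1) * (\<Prod>x\<in>X-Y. 1))"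
    by (rule prod_diff_conv_sum[OF assms])
  hence "(\<Sum>Y\<in>Pow X. (-1::int) ^ card Y) = (\<Prod>x\<in>X. (0::int))" by simp
  also have "\<dots> = (if X = {} then 1 else 0)" using assms by (simp add: card_gt_0_iff)
  finally show ?thesis .
qed

lemma lefts_mem: "Inl a \<in> (\<Union>P\<in>F. pverts P) \<longleftrightarrow> a \<in> lefts F"
  unfolding lefts_def by (simp add: pverts_mem_Inl)

lemma rights_mem: "Inr b \<in> (\<Union>P\<in>F. pverts P) \<longleftrightarrow> b \<in> rights F"
  unfolding rights_def by (simp add: pverts_mem_Inr)

lemma compl_verts:
  "Inl ` (A - lefts F) \<union> Inr ` (B - rights F) = (Inl ` A \<union> Inr ` B) - (\<Union>P\<in>F. pverts P)"
proof (rule set_eqI)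
  fix x show "x \<in> Inl ` (A - lefts F) \<union> Inr ` (B - rights F) \<longleftrightarrow> x \<in> (Inl ` A \<union> Inr ` B) - (\<Union>P\<in>F. pverts P)"
  proof (cases x)
    case (Inl a) thus ?thesis using lefts_mem[of a F] by auto
  next
    case (Inr b) thus ?thesis using rights_mem[of b F] by auto
  qed
qed

lemma fam_verts_sub: "t > 0 \<Longrightarrow> F \<in> path_families t A B \<Longrightarrow> (\<Union>P\<in>F. pverts P) \<subseteq> Inl ` A \<union> Inr ` B"
  using tp_pverts(1) fam_tp by blast

lemma K1:
  assumes t: "t > 0" and F: "F \<in> path_families t A B"
    and G: "G \<in> path_coverings t (A - lefts F) (B - rights F)"
    and cov: "H = F \<union> G"
  shows "H \<in> path_coverings t A B" "F \<inter> G = {}"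
proof -
  let ?U = "\<Union>P\<in>F. pverts P"
  have G1: "G \<in> path_families t (A - lefts F) (B - rights F)"
    and G2: "(\<Union>P\<in>G. pverts P) = Inl ` (A - lefts F) \<union> Inr ` (B - rights F)"
    using G unfolding path_coverings_def by auto
  have Gtp: "P \<in> tpaths t A B" if "P \<in> G" for P
    using fam_tp[OF G1 that] tpaths_mono[of "A - lefts F" A "B - rights F" B t] by blast
  have Gv: "pverts P \<inter> ?U = {}" if "P \<in> G" for P
    using tp_pverts(1)[OF t fam_tp[OF G1 that]] compl_verts[of A F B] by blast
  have Gne: "pverts P \<noteq> {}" if "P \<in> G" for P
    using tp_pverts(2)[OF t Gtp[OF that]] .
  show "F \<inter> G = {}"
  proof (rule ccontr)
    assume "F \<inter> G \<noteq> {}"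
    then obtain P where "P \<in> F" "P \<in> G" by blast
    thus False using Gv[of P] Gne[of P] by blast
  qed
  have fam: "H \<in> path_families t A B"
    unfolding path_families_def
  proof (intro CollectI conjI ballI impI subsetI)
    fix P assume "P \<in> H" thus "P \<in> tpaths t A B" using cov fam_tp[OF F] Gtp by blast
  next
    fix P Q assume h: "P \<in> H" "Q \<in> H" "P \<noteq> Q"
    show "pverts P \<inter> pverts Q = {}"
    proof (cases "P \<in> F")
      case PF: True
      show ?thesis
      proof (cases "Q \<in> F")
        case True show ?thesis by (rule fam_disj[OF F PF True h(3)])
      next
        case False hence "Q \<in> G" using h cov by blast
        thus ?thesis using Gv[of Q] PF by blast
      qed
    next
      case PG: False hence PG': "P \<in> G" using h cov by blast
      show ?thesis
      proof (cases "Q \<in> F")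
        case True thus ?thesis using Gv[OF PG'] by blast
      next
        case False hence "Q \<in> G" using h cov by blast
        thus ?thesis using fam_disj[OF G1 PG' _ h(3)] by blast
      qed
    qed
  qed
  have "(\<Union>P\<in>H. pverts P) = ?U \<union> (\<Union>P\<in>G. pverts P)" using cov by simp
  also have "\<dots> = ?U \<union> ((Inl ` A \<union> Inr ` B) - ?U)" using G2 compl_verts[of A F B] by simp
  also have "\<dots> = Inl ` A \<union> Inr ` B" using fam_verts_sub[OF t F] by (simp add: Un_Diff_cancel Un_absorb1)
  finally show "H \<in> path_coverings t A B" using fam unfolding path_coverings_def by blast
qed

lemma K2:
  assumes t: "t > 0" and H: "H \<in> path_coverings t A B" and FH: "F \<subseteq> H"
  shows "F \<in> path_families t A B" "H - F \<in> path_coverings t (A - lefts F) (B - rights F)"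
proof -
  let ?U = "\<Union>P\<in>F. pverts P"
  have H1: "H \<in> path_families t A B" and H2: "(\<Union>P\<in>H. pverts P) = Inl ` A \<union> Inr ` B"
    using H unfolding path_coverings_def by auto
  show F: "F \<in> path_families t A B" using fam_sub[OF H1 FH] .
  have dis: "pverts P \<inter> ?U = {}" if "P \<in> H - F" for P
    using fam_disj[OF H1] that FH by blast
  have tp: "P \<in> tpaths t (A - lefts F) (B - rights F)" if P: "P \<in> H - F" for P
  proof -
    have "P \<in> tpaths t A B" using fam_tp[OF H1] P by blast
    hence a: "P \<in> tpaths t UNIV UNIV" "pverts P \<subseteq> Inl ` A \<union> Inr ` B"
      using tpaths_restrict[OF t, of P A B] by simp_all
    have "pverts P \<subseteq> (Inl ` A \<union> Inr ` B) - ?U"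
      using a(2) dis[OF P] by blast
    hence "pverts P \<subseteq> Inl ` (A - lefts F) \<union> Inr ` (B - rights F)" by (simp only: compl_verts)
    thus ?thesis using a(1) tpaths_restrict[OF t, of P "A - lefts F" "B - rights F"] by simp
  qed
  have fam: "H - F \<in> path_families t (A - lefts F) (B - rights F)"
    unfolding path_families_def using tp fam_disj[OF H1] by blast
  have "(\<Union>P\<in>H - F. pverts P) = (\<Union>P\<in>H. pverts P) - ?U"
  proof
    show "(\<Union>P\<in>H - F. pverts P) \<subseteq> (\<Union>P\<in>H. pverts P) - ?U" using dis by blast
    show "(\<Union>P\<in>H. pverts P) - ?U \<subseteq> (\<Union>P\<in>H - F. pverts P)" by blast
  qed
  also have "\<dots> = Inl ` (A - lefts F) \<union> Inr ` (B - rights F)" using H2 compl_verts[of A F B] by simp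
  finally show "H - F \<in> path_coverings t (A - lefts F) (B - rights F)"
    using fam unfolding path_coverings_def by blast
qed



lemma stepC:
  assumes t: "t > 0" and fin: "finite A" "finite B"
  shows "(\<Sum>F\<in>{F\<in>path_families t A B. \<forall>P\<in>F. Q P}.
            (-1::int) ^ card F * int (card (path_coverings t (A - lefts F) (B - rights F))))
         = int (card {H\<in>path_coverings t A B. \<forall>P\<in>H. \<not> Q P})"
proof -
  define S where "S = {F\<in>path_families t A B. \<forall>P\<in>F. Q P}"
  define C where "C F = path_coverings t (A - lefts F) (B - rights F)" for F
  define Cv where "Cv = path_coverings t A B"
  define T where "T = Sigma Cv (\<lambda>H. Pow {P\<in>H. Q P})"
  define \<phi> where "\<phi> = (\<lambda>(H::('a \<times> 'b) set set, F::('a \<times> 'b) set set). (F, H - F))"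
  define \<psi> where "\<psi> = (\<lambda>(F::('a \<times> 'b) set set, G::('a \<times> 'b) set set). (F \<union> G, F))"
  have finS: "finite S" unfolding S_def by (rule finite_subset[OF _ finite_families[OF t fin]]) auto
  have finC: "finite (C F)" for F unfolding C_def by (rule finite_coverings[OF t]) (simp_all add: fin)
  have finCv: "finite Cv" unfolding Cv_def by (rule finite_coverings[OF t fin])
  have finH: "finite H" if "H \<in> Cv" for H
  proof -
    have "H \<subseteq> Pow (A \<times> B)" using that families_sub[OF t, of A B] unfolding Cv_def path_coverings_def by blast
    moreover have "finite (Pow (A \<times> B))" using fin by simp
    ultimately show ?thesis by (rule finite_subset)
  qed
  have bij: "bij_betw \<phi> T (Sigma S C)"
  proof (rule bij_betw_byWitness[where f' = \<psi>])
    show "\<forall>a\<in>T. \<psi> (\<phi> a) = a" unfolding T_def \<phi>_def \<psi>_def by auto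
    show "\<forall>a'\<in>Sigma S C. \<phi> (\<psi> a') = a'"
    proof
      fix p assume "p \<in> Sigma S C"
      then obtain F G where p: "p = (F, G)" "F \<in> S" "G \<in> C F" by blast
      have "F \<inter> G = {}" using K1(2)[OF t _ _ refl, of F A B G] p unfolding S_def C_def by blast
      thus "\<phi> (\<psi> p) = p" unfolding p \<phi>_def \<psi>_def by auto
    qed
    show "\<phi> ` T \<subseteq> Sigma S C"
    proof
      fix x assume "x \<in> \<phi> ` T"
      then obtain H F where x: "x = (F, H - F)" "H \<in> Cv" "F \<subseteq> {P\<in>H. Q P}"
        unfolding T_def \<phi>_def by auto
      have "F \<subseteq> H" using x(3) by blast
      hence "F \<in> path_families t A B" "H - F \<in> C F"
        using K2[OF t, of H A B F] x(2) unfolding Cv_def C_def by auto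
      moreover have "\<forall>P\<in>F. Q P" using x(3) by blast
      ultimately show "x \<in> Sigma S C" unfolding S_def x(1) by blast
    qed
    show "\<psi> ` Sigma S C \<subseteq> T"
    proof
      fix x assume "x \<in> \<psi> ` Sigma S C"
      then obtain F G where x: "x = (F \<union> G, F)" "F \<in> S" "G \<in> C F"
        unfolding \<psi>_def by auto
      have "F \<union> G \<in> Cv" using K1(1)[OF t _ _ refl, of F A B G] x unfolding S_def C_def Cv_def by blast
      moreover have "F \<subseteq> {P\<in>F \<union> G. Q P}" using x(2) unfolding S_def by blast
      ultimately show "x \<in> T" unfolding T_def x(1) by blast
    qed
  qed
  have "(\<Sum>F\<in>S. (-1::int) ^ card F * int (card (C F))) = (\<Sum>F\<in>S. \<Sum>G\<in>C F. (-1::int) ^ card F)"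
    by (rule sum.cong) (simp_all add: mult.commute)
  also have "\<dots> = (\<Sum>p\<in>Sigma S C. (-1::int) ^ card (fst p))"
    using sum.Sigma[OF finS, of C "\<lambda>F G. (-1::int) ^ card F"] finC by (simp add: split_def)
  also have "\<dots> = (\<Sum>q\<in>T. (-1::int) ^ card (fst (\<phi> q)))"
    by (rule sum.reindex_bij_betw[OF bij, symmetric])
  also have "\<dots> = (\<Sum>q\<in>T. (-1::int) ^ card (snd q))"
    by (rule sum.cong) (auto simp: \<phi>_def)
  also have "\<dots> = (\<Sum>H\<in>Cv. \<Sum>F\<in>Pow {P\<in>H. Q P}. (-1::int) ^ card F)"
    unfolding T_def using sum.Sigma[OF finCv, of "\<lambda>H. Pow {P\<in>H. Q P}" "\<lambda>H F. (-1::int) ^ card F"] finH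
    by (simp add: split_def)
  also have "\<dots> = (\<Sum>H\<in>Cv. if \<forall>P\<in>H. \<not> Q P then 1 else 0)"
  proof (rule sum.cong[OF refl])
    fix H assume "H \<in> Cv"
    hence "finite {P\<in>H. Q P}" using finH by simp
    thus "(\<Sum>F\<in>Pow {P\<in>H. Q P}. (-1::int) ^ card F) = (if \<forall>P\<in>H. \<not> Q P then 1 else 0)"
      using alt_pow_sum[of "{P\<in>H. Q P}"] by auto
  qed
  also have "\<dots> = int (card {H\<in>Cv. \<forall>P\<in>H. \<not> Q P})"
    using sum.inter_filter[OF finCv, of "\<lambda>_. (1::int)" "\<lambda>H. \<forall>P\<in>H. \<not> Q P"] by simp
  finally show ?thesis unfolding S_def C_def Cv_def .
qed



definition emb :: "nat \<Rightarrow> (nat \<times> nat) set \<Rightarrow> ((nat \<times> nat) \<times> (nat \<times> nat)) set" where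
  "emb i Q = map_prod (Pair i) (Pair i) ` Q"

definition unemb :: "((nat \<times> nat) \<times> (nat \<times> nat)) set \<Rightarrow> (nat \<times> nat) set" where
  "unemb P = map_prod snd snd ` P"

definition Ci :: "nat \<Rightarrow> ((nat \<times> nat) \<times> (nat \<times> nat)) set" where
  "Ci i = {(x, y). fst x = i \<and> fst y = i}"

definition homp :: "((nat \<times> nat) \<times> (nat \<times> nat)) set \<Rightarrow> bool" where
  "homp P \<longleftrightarrow> (\<exists>i. \<forall>v\<in>pverts P. blk v = i)"

lemma unemb_emb: "unemb (emb i Q) = Q"
proof -
  have "(\<lambda>x. map_prod snd snd (map_prod (Pair i) (Pair i) x)) = (\<lambda>x. x)" by (auto simp: fun_eq_iff)
  note e = this
  show ?thesis unfolding unemb_def emb_def image_image by (subst e) (rule image_ident)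
qed

lemma emb_unemb: "P \<subseteq> Ci i \<Longrightarrow> emb i (unemb P) = P"
proof -
  assume P: "P \<subseteq> Ci i"
  have "\<forall>x\<in>P. map_prod (Pair i) (Pair i) (map_prod snd snd x) = x"
    using P unfolding Ci_def by auto
  hence "(\<lambda>x. map_prod (Pair i) (Pair i) (map_prod snd snd x)) ` P = (\<lambda>x. x) ` P"
    by (intro image_cong) auto
  note e = this
  show ?thesis unfolding unemb_def emb_def image_image by (subst e) (rule image_ident)
qed

lemma inj_emb: "inj (emb i)"
  by (rule inj_on_inverseI[where g = unemb]) (rule unemb_emb)

lemma emb_Ci: "emb i Q \<subseteq> Ci i"
  unfolding emb_def Ci_def by auto

lemma Ci_disj: "i \<noteq> i' \<Longrightarrow> Ci i \<inter> Ci i' = {}"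
  unfolding Ci_def by auto

lemma emb_ne: "Q \<noteq> {} \<Longrightarrow> emb i Q \<noteq> {}"
  unfolding emb_def by simp

lemma pverts_emb: "pverts (emb i Q) \<subseteq> {v. blk v = i}"
  unfolding pverts_def emb_def by (auto simp: blk_def)

lemma tp_ne: "t > 0 \<Longrightarrow> P \<in> tpaths t A B \<Longrightarrow> P \<noteq> {}"
  using tp_pverts(2)[of t P A B] unfolding pverts_def by auto

lemma Bi_eq: "i < length ns \<Longrightarrow> {x \<in> blocks ns. fst x = i} = Pair i ` {..<ns ! i}"
  unfolding blocks_def by auto

lemma emb_tp:
  assumes t: "t > 0" and i: "i < length ns" and Q: "Q \<in> tpaths t {..<ns ! i} {..<ns ! i}"
  shows "emb i Q \<in> tpaths t (blocks ns) (blocks ns)"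
proof -
  have "emb i Q \<in> tpaths t (Pair i ` {..<ns ! i}) (Pair i ` {..<ns ! i})"
    unfolding emb_def by (rule tpaths_map[OF t Q]) (simp_all add: inj_on_def)
  moreover have "Pair i ` {..<ns ! i} \<subseteq> blocks ns" using Bi_eq[OF i] by blast
  ultimately show ?thesis using tpaths_mono by blast
qed

lemma finite_fam:
  assumes t: "t > 0" and fin: "finite A" "finite B" and F: "F \<in> path_families t A B"
  shows "finite F"
proof -
  have "F \<subseteq> Pow (A \<times> B)" using families_sub[OF t] F by blast
  moreover have "finite (Pow (A \<times> B))" using fin by simp
  ultimately show ?thesis by (rule finite_subset)
qed

definition Theta :: "nat list \<Rightarrow> (nat \<Rightarrow> (nat \<times> nat) set set) \<Rightarrow> ((nat \<times> nat) \<times> (nat \<times> nat)) set set" where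
  "Theta ns Fs = (\<Union>i<length ns. emb i ` Fs i)"

definition famI :: "nat \<Rightarrow> nat list \<Rightarrow> nat \<Rightarrow> (nat \<times> nat) set set set" where
  "famI t ns i = path_families t {..<ns ! i} {..<ns ! i}"

definition HF :: "nat \<Rightarrow> nat list \<Rightarrow> ((nat \<times> nat) \<times> (nat \<times> nat)) set set set" where
  "HF t ns = {F \<in> path_families t (blocks ns) (blocks ns). \<forall>P\<in>F. homp P}"

lemma Theta_mem:
  assumes t: "t > 0" and P: "P \<in> Theta ns Fs"
  obtains i Q where "i < length ns" "Q \<in> Fs i" "P = emb i Q"
  using P unfolding Theta_def by blast

lemma Theta_sel:
  assumes t: "t > 0" and Fs: "Fs \<in> PiE {..<length ns} (famI t ns)" and i: "i < length ns"
  shows "emb i ` Fs i = {P \<in> Theta ns Fs. P \<subseteq> Ci i}"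
proof
  show "emb i ` Fs i \<subseteq> {P \<in> Theta ns Fs. P \<subseteq> Ci i}"
    using i emb_Ci unfolding Theta_def by blast
  show "{P \<in> Theta ns Fs. P \<subseteq> Ci i} \<subseteq> emb i ` Fs i"
  proof
    fix P assume "P \<in> {P \<in> Theta ns Fs. P \<subseteq> Ci i}"
    hence P: "P \<in> Theta ns Fs" "P \<subseteq> Ci i" by auto
    then obtain i' Q where iQ: "i' < length ns" "Q \<in> Fs i'" "P = emb i' Q"
      using Theta_mem[OF t] by blast
    have "Fs i' \<in> famI t ns i'" using Fs iQ(1) by blast
    hence "Q \<in> tpaths t {..<ns ! i'} {..<ns ! i'}" using fam_tp iQ(2) unfolding famI_def by blast
    hence "P \<noteq> {}" using tp_ne[OF t] emb_ne iQ(3) by blast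
    moreover have "P \<subseteq> Ci i'" using emb_Ci iQ(3) by blast
    ultimately have "i' = i" using P(2) Ci_disj by blast
    thus "P \<in> emb i ` Fs i" using iQ by blast
  qed
qed

lemma Theta_inj:
  assumes t: "t > 0"
  shows "inj_on (Theta ns) (PiE {..<length ns} (famI t ns))"
proof (rule inj_onI)
  fix Fs Gs assume Fs: "Fs \<in> PiE {..<length ns} (famI t ns)" and Gs: "Gs \<in> PiE {..<length ns} (famI t ns)"
    and e: "Theta ns Fs = Theta ns Gs"
  show "Fs = Gs"
  proof (rule PiE_ext[OF Fs Gs])
    fix i assume "i \<in> {..<length ns}"
    hence i: "i < length ns" by simp
    have "emb i ` Fs i = emb i ` Gs i" using Theta_sel[OF t Fs i] Theta_sel[OF t Gs i] e by simp
    thus "Fs i = Gs i" using inj_emb by (simp add: inj_image_eq_iff)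
  qed
qed

lemma Theta_into:
  assumes t: "t > 0" and Fs: "Fs \<in> PiE {..<length ns} (famI t ns)"
  shows "Theta ns Fs \<in> HF t ns"
proof -
  have tp: "P \<in> tpaths t (blocks ns) (blocks ns)" if PT: "P \<in> Theta ns Fs" for P
  proof -
    obtain i Q where iQ: "i < length ns" "Q \<in> Fs i" "P = emb i Q"
      using Theta_mem[OF t PT] by blast
    have "Fs i \<in> famI t ns i" using Fs iQ(1) by blast
    hence "Q \<in> tpaths t {..<ns ! i} {..<ns ! i}" using fam_tp iQ(2) unfolding famI_def by blast
    thus ?thesis using emb_tp[OF t iQ(1)] iQ(3) by blast
  qed
  have dis: "pverts P \<inter> pverts P' = {}" if PP: "P \<in> Theta ns Fs" "P' \<in> Theta ns Fs" "P \<noteq> P'" for P P'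
  proof -
    obtain i Q where iQ: "i < length ns" "Q \<in> Fs i" "P = emb i Q"
      using Theta_mem[OF t PP(1)] by blast
    obtain i' Q' where iQ': "i' < length ns" "Q' \<in> Fs i'" "P' = emb i' Q'"
      using Theta_mem[OF t PP(2)] by blast
    show ?thesis
    proof (cases "i = i'")
      case True
      have F: "Fs i \<in> famI t ns i" using Fs iQ(1) by blast
      have "emb i ` Fs i \<in> path_families t (Pair i ` {..<ns ! i}) (Pair i ` {..<ns ! i})"
        using families_map[OF t F[unfolded famI_def], of "Pair i" "Pair i"] unfolding emb_def
        by (simp add: inj_on_def)
      moreover have "P \<in> emb i ` Fs i" "P' \<in> emb i ` Fs i" using iQ iQ' True by auto
      ultimately show ?thesis using fam_disj PP(3) by blast
    next
      case False
      thus ?thesis using pverts_emb[of i Q] pverts_emb[of i' Q'] iQ(3) iQ'(3) by blast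
    qed
  qed
  have hom: "homp P" if PT: "P \<in> Theta ns Fs" for P
  proof -
    obtain i Q where "P = emb i Q" using Theta_mem[OF t PT] by blast
    thus ?thesis using pverts_emb[of i Q] unfolding homp_def by blast
  qed
  show ?thesis unfolding HF_def path_families_def using tp dis hom by blast
qed

lemma homp_Ci:
  assumes t: "t > 0" and F: "F \<in> HF t ns" and P: "P \<in> F"
  shows "\<exists>i<length ns. P \<subseteq> Ci i"
proof -
  have F1: "F \<in> path_families t (blocks ns) (blocks ns)" and h: "homp P" using F P unfolding HF_def by auto
  obtain i where i: "\<forall>v\<in>pverts P. blk v = i" using h unfolding homp_def by blast
  have tp: "P \<in> tpaths t (blocks ns) (blocks ns)" using fam_tp[OF F1 P] .
  obtain v where v: "v \<in> pverts P" using tp_pverts(2)[OF t tp] by blast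
  have "v \<in> Inl ` blocks ns \<union> Inr ` blocks ns" using tp_pverts(1)[OF t tp] v by blast
  hence "blk v < length ns" unfolding blocks_def blk_def by auto
  hence il: "i < length ns" using i v by simp
  have "P \<subseteq> Ci i"
  proof
    fix x assume x: "x \<in> P"
    obtain a b where ab: "x = (a, b)" by (cases x)
    have "Inl a \<in> pverts P" "Inr b \<in> pverts P" using x ab unfolding pverts_def by force+
    hence "fst a = i" "fst b = i" using i unfolding blk_def by force+
    thus "x \<in> Ci i" using ab unfolding Ci_def by simp
  qed
  thus ?thesis using il by blast
qed

lemma Theta_onto:
  assumes t: "t > 0" and F: "F \<in> HF t ns"
  shows "F \<in> Theta ns ` PiE {..<length ns} (famI t ns)"
proof -
  have F1: "F \<in> path_families t (blocks ns) (blocks ns)" using F unfolding HF_def by auto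
  define Fs where "Fs = (\<lambda>i\<in>{..<length ns}. unemb ` {P\<in>F. P \<subseteq> Ci i})"
  have Fs: "Fs \<in> PiE {..<length ns} (famI t ns)"
  proof (rule PiE_I)
    fix i assume "i \<in> {..<length ns}"
    hence i: "i < length ns" by simp
    let ?B = "{x \<in> blocks ns. fst x = i}"
    let ?G = "{P\<in>F. P \<subseteq> Ci i}"
    have G: "?G \<in> path_families t ?B ?B"
      unfolding path_families_def
    proof (intro CollectI conjI subsetI ballI impI)
      fix P assume P: "P \<in> ?G"
      have tp: "P \<in> tpaths t (blocks ns) (blocks ns)" using fam_tp[OF F1] P by blast
      have "P \<subseteq> blocks ns \<times> blocks ns" using tp_pverts(4)[OF t tp] .
      hence "P \<subseteq> ?B \<times> ?B" using P unfolding Ci_def by auto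
      hence "pverts P \<subseteq> Inl ` ?B \<union> Inr ` ?B" by (rule sub_imp_pverts)
      thus "P \<in> tpaths t ?B ?B" using tp tpaths_restrict[OF t] by blast
    next
      fix P Q assume "P \<in> ?G" "Q \<in> ?G" "P \<noteq> Q"
      thus "pverts P \<inter> pverts Q = {}" using fam_disj[OF F1] by blast
    qed
    have inj: "inj_on snd ?B" by (auto simp: inj_on_def prod_eq_iff)
    have "snd ` ?B = {..<ns ! i}" using Bi_eq[OF i] by (simp add: image_image)
    hence "unemb ` ?G \<in> path_families t {..<ns ! i} {..<ns ! i}"
      using families_map[OF t G inj inj] unfolding unemb_def by simp
    thus "Fs i \<in> famI t ns i" unfolding Fs_def famI_def using i by simp
  next
    fix i assume "i \<notin> {..<length ns}" thus "Fs i = undefined" unfolding Fs_def by simp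
  qed
  have "Theta ns Fs = (\<Union>i<length ns. emb i ` unemb ` {P\<in>F. P \<subseteq> Ci i})"
    unfolding Theta_def Fs_def by simp
  also have "\<dots> = (\<Union>i<length ns. {P\<in>F. P \<subseteq> Ci i})"
  proof (rule SUP_cong[OF refl])
    fix i show "emb i ` unemb ` {P\<in>F. P \<subseteq> Ci i} = {P\<in>F. P \<subseteq> Ci i}"
      using emb_unemb[of _ i] by (force simp: image_image)
  qed
  also have "\<dots> = F" using homp_Ci[OF t F] by blast
  finally show ?thesis using Fs by blast
qed

lemma Theta_bij:
  assumes t: "t > 0"
  shows "bij_betw (Theta ns) (PiE {..<length ns} (famI t ns)) (HF t ns)"
  unfolding bij_betw_def using Theta_inj[OF t] Theta_into[OF t] Theta_onto[OF t] by blast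

lemma Theta_card:
  assumes t: "t > 0" and Fs: "Fs \<in> PiE {..<length ns} (famI t ns)"
  shows "card (Theta ns Fs) = (\<Sum>i<length ns. card (Fs i))"
proof -
  have famF: "Fs i \<in> famI t ns i" if "i < length ns" for i using Fs that by blast
  have fin: "finite (Fs i)" if "i < length ns" for i
    using famF[OF that] finite_fam[OF t, of "{..<ns ! i}" "{..<ns ! i}"] unfolding famI_def by simp
  have "card (Theta ns Fs) = (\<Sum>i<length ns. card (emb i ` Fs i))"
    unfolding Theta_def
  proof (rule card_UN_disjoint)
    show "finite {..<length ns}" by simp
    show "\<forall>i\<in>{..<length ns}. finite (emb i ` Fs i)" using fin by simp
    show "\<forall>i\<in>{..<length ns}. \<forall>j\<in>{..<length ns}. i \<noteq> j \<longrightarrow> emb i ` Fs i \<inter> emb j ` Fs j = {}"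
    proof (intro ballI impI)
      fix i j assume ij: "i \<in> {..<length ns}" "j \<in> {..<length ns}" "i \<noteq> j"
      show "emb i ` Fs i \<inter> emb j ` Fs j = {}"
      proof (rule ccontr)
        assume "emb i ` Fs i \<inter> emb j ` Fs j \<noteq> {}"
        then obtain Q Q' where QQ: "Q \<in> Fs i" "Q' \<in> Fs j" "emb i Q = emb j Q'" by blast
        have "Q \<in> tpaths t {..<ns ! i} {..<ns ! i}" using famF ij(1) QQ(1) fam_tp unfolding famI_def by blast
        hence "emb i Q \<noteq> {}" using tp_ne[OF t] emb_ne by blast
        moreover have "emb i Q \<subseteq> Ci i \<inter> Ci j" using emb_Ci[of i Q] emb_Ci[of j Q'] QQ(3) by blast
        ultimately show False using Ci_disj[OF ij(3)] by blast
      qed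
    qed
  qed
  also have "\<dots> = (\<Sum>i<length ns. card (Fs i))"
    using card_image[OF inj_on_subset[OF inj_emb subset_UNIV]] by simp
  finally show ?thesis .
qed



lemma prod_monom: "finite I \<Longrightarrow> (\<Prod>i\<in>I. monom (c i) (d i)) = monom (\<Prod>i\<in>I. c i) (\<Sum>i\<in>I. d i)"
  by (induction I rule: finite_induct) (simp_all add: mult_monom monom_0 one_pCons)

lemma prod_list_map_nth: "prod_list (map (f :: 'a \<Rightarrow> 'b :: comm_monoid_mult) xs) = (\<Prod>i<length xs. f (xs ! i))"
  by (induction xs) (simp_all add: prod.lessThan_Suc_shift del: prod.lessThan_Suc)

lemma fam_bound:
  assumes t: "odd t" and F: "F \<in> path_families t {..<n} {..<n}"
  shows "(t + 1) div 2 * card F \<le> n"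
proof -
  have "card (lefts F) = (t + 1) div 2 * card F" "lefts F \<subseteq> {..<n}"
    using lefts_card[OF t F] by simp_all
  thus ?thesis using card_mono[of "{..<n}" "lefts F"] by simp
qed

lemma stepA:
  assumes t: "odd t"
  shows "prod_list (map (Lpoly t) ns) = (\<Sum>F\<in>HF t ns. monom ((-1) ^ card F)
            ((\<Sum>i<length ns. ns ! i) - (t + 1) div 2 * card F))"
proof -
  define k where "k = (t + 1) div 2"
  define N where "N = (\<Sum>i<length ns. ns ! i)"
  have t0: "t > 0" using t by (cases t) auto
  have finI: "finite (famI t ns i)" for i
    unfolding famI_def by (rule finite_families[OF t0]) simp_all
  have "prod_list (map (Lpoly t) ns) = (\<Prod>i<length ns. Lpoly t (ns ! i))"
    by (rule prod_list_map_nth)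
  also have "\<dots> = (\<Prod>i<length ns. \<Sum>F\<in>famI t ns i. monom ((-1) ^ card F) (ns ! i - k * card F))"
    unfolding Lpoly_def famI_def k_def by simp
  also have "\<dots> = (\<Sum>Fs\<in>PiE {..<length ns} (famI t ns).
        \<Prod>i<length ns. monom ((-1) ^ card (Fs i)) (ns ! i - k * card (Fs i)))"
    by (rule prod_sum_PiE) (simp_all add: finI)
  also have "\<dots> = (\<Sum>Fs\<in>PiE {..<length ns} (famI t ns).
        monom ((-1) ^ card (Theta ns Fs)) (N - k * card (Theta ns Fs)))"
  proof (rule sum.cong[OF refl])
    fix Fs assume Fs: "Fs \<in> PiE {..<length ns} (famI t ns)"
    have bnd: "k * card (Fs i) \<le> ns ! i" if "i \<in> {..<length ns}" for i
      using fam_bound[OF t, of "Fs i" "ns ! i"] Fs that unfolding famI_def k_def by blast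
    have "(\<Prod>i<length ns. monom ((-1::int) ^ card (Fs i)) (ns ! i - k * card (Fs i)))
        = monom (\<Prod>i<length ns. (-1) ^ card (Fs i)) (\<Sum>i<length ns. ns ! i - k * card (Fs i))"
      by (rule prod_monom) simp
    also have "(\<Prod>i<length ns. (-1::int) ^ card (Fs i)) = (-1) ^ (\<Sum>i<length ns. card (Fs i))"
      by (simp add: power_sum)
    also have "(\<Sum>i<length ns. ns ! i - k * card (Fs i)) = N - (\<Sum>i<length ns. k * card (Fs i))"
      unfolding N_def by (rule sum_subtractf_nat) (use bnd in auto)
    also have "(\<Sum>i<length ns. k * card (Fs i)) = k * (\<Sum>i<length ns. card (Fs i))"
      by (simp add: sum_distrib_left)
    finally show "(\<Prod>i<length ns. monom ((-1::int) ^ card (Fs i)) (ns ! i - k * card (Fs i)))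
        = monom ((-1) ^ card (Theta ns Fs)) (N - k * card (Theta ns Fs))"
      using Theta_card[OF t0 Fs] by simp
  qed
  also have "\<dots> = (\<Sum>F\<in>HF t ns. monom ((-1) ^ card F) (N - k * card F))"
    by (rule sum.reindex_bij_betw[OF Theta_bij[OF t0]])
  finally show ?thesis unfolding N_def k_def .
qed

theorem mainTheorem16:
  fixes t :: nat and ns :: "nat list"
  assumes "odd t"
  shows "Lfun t (\<Prod>n\<leftarrow>ns. Lpoly t n) = int (card (inhom_coverings t ns))"
proof -
  have t: "odd t" by fact
  define k where "k = (t + 1) div 2"
  define N where "N = (\<Sum>i<length ns. ns ! i)"
  define V where "V = blocks ns"
  have t0: "t > 0" using t by (cases t) auto
  have Vs: "V = Sigma {..<length ns} (\<lambda>i. {..<ns ! i})" unfolding V_def blocks_def by auto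
  have finV: "finite V" unfolding Vs by simp
  have cardV: "card V = N" unfolding Vs N_def by simp
  have finHF: "finite (HF t ns)" unfolding HF_def
    by (rule finite_subset[OF _ finite_families[OF t0]]) (auto simp: finV[unfolded V_def])
  have "Lfun t (\<Prod>n\<leftarrow>ns. Lpoly t n) = Lfun t (\<Sum>F\<in>HF t ns. monom ((-1) ^ card F) (N - k * card F))"
    using stepA[OF t, of ns] unfolding N_def k_def by simp
  also have "\<dots> = (\<Sum>F\<in>HF t ns. (-1) ^ card F * int (mu t (N - k * card F)))"
    by (simp add: Lfun_sum[OF finHF] Lfun_monom)
  also have "\<dots> = (\<Sum>F\<in>HF t ns. (-1) ^ card F * int (card (path_coverings t (V - lefts F) (V - rights F))))"
  proof (rule sum.cong[OF refl])
    fix F assume "F \<in> HF t ns"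
    hence F: "F \<in> path_families t V V" unfolding HF_def V_def by simp
    have l: "card (lefts F) = k * card F" "lefts F \<subseteq> V" "card (rights F) = k * card F" "rights F \<subseteq> V"
      using lefts_card[OF t F finV finV] unfolding k_def by simp_all
    have fl: "finite (lefts F)" "finite (rights F)" using l finV finite_subset by blast+
    have "card (V - lefts F) = N - k * card F" "card (V - rights F) = N - k * card F"
      using card_Diff_subset[OF fl(1) l(2)] card_Diff_subset[OF fl(2) l(4)] l cardV by simp_all
    hence "card (path_coverings t (V - lefts F) (V - rights F)) = mu t (N - k * card F)"
      by (intro coverings_card_mu[OF t0]) (use finV in simp_all)
    thus "(-1) ^ card F * int (mu t (N - k * card F))
        = (-1) ^ card F * int (card (path_coverings t (V - lefts F) (V - rights F)))" by simp
  qed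
  also have "\<dots> = int (card {H\<in>path_coverings t V V. \<forall>P\<in>H. \<not> homp P})"
    unfolding HF_def V_def[symmetric] by (rule stepC[OF t0 finV finV])
  also have "\<dots> = int (card (inhom_coverings t ns))"
    unfolding inhom_coverings_def homp_def V_def by simp
  finally show ?thesis .
qed

end
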